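(* Let $p$ be a prime and $(K,|\cdot|)$ an ultrametric field of residue characteristic $p$. Let $\lambda\in K$ with $|\lambda|=1$ such that the order $q$ of $\widetilde\lambda$ in $\widetilde K^*$ is finite, and let $f(z)=\lambda z+\cdots\in\mathcal{O}_K[[z]]$. (1) Suppose $\lambda^q\ne1$ and let $w_0$ be a periodic point of $f$ of minimal period $q$ (with $w_0\ne0$ if $q=1$). Then $|w_0|\ge|\lambda^q-1|^{1/q}$, with equality if and only if $\mathrm{wideg}(f^q(z)-z)=q+1$. Moreover, if equality holds, then the cycle containing $w_0$ is the only cycle of minimal period $q$ of $f$ in $\mathfrak{m}_K\setminus\{0\}$, and every point $w_0'$ of this cycle satisfies $|w_0'|=|\lambda^q-1|^{1/q}$. (2) Let $n\ge1$ be an integer with $\lambda^{qp^n}\ne1$ and let $z_0$ be a periodic point of $f$ of minimal period $qp^n$. Then $|z_0|\ge\left|\frac{\lambda^{qp^n}-1}{\lambda^{qp^{n-1}}-1}\right|^{1/(qp^n)}$, with equality if and only if $\mathrm{wideg}\left(\frac{f^{qp^n}(z)-z}{f^{qp^{n-1}}(z)-z}\right)=qp^n$. Moreover, if equality holds, then the cycle containing $z_0$ is the only cycle of minimal period $qp^n$ of $f$, and every point $z_0'$ in this cycle satisfies the equality with $z_0$ replaced by $z_0'$.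
   Context: $\mathcal{O}_K=\{|z|\le1\}$, $\mathfrak{m}_K=\{|z|<1\}$, $\widetilde K=\mathcal{O}_K/\mathfrak{m}_K$. Periodic points are taken in $\mathfrak{m}_K$, which $f$ maps to itself. For $h\in\mathcal{O}_K[[z]]$, the Weierstrass degree $\mathrm{wideg}(h)$ is the order (lowest degree of a nonzero term, $+\infty$ for $0$) of the reduction $\widetilde h\in\widetilde K[[\zeta]]$. The power series $f^{qp^{n-1}}(z)-z$ divides $f^{qp^n}(z)-z$ in $\mathcal{O}_K[[z]]$, so the quotient above lies in $\mathcal{O}_K[[z]]$. *)

theory Defs
  imports Complex_Main "HOL-Computational_Algebra.Formal_Power_Series" "HOL-Library.Extended_Nat"
begin

definition ultrametric_abs :: "('a::field \<Rightarrow> real) \<Rightarrow> bool" where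
  "ultrametric_abs av \<longleftrightarrow>
     (\<forall>x. av x \<ge> 0) \<and> (\<forall>x. av x = 0 \<longleftrightarrow> x = 0) \<and>
     (\<forall>x y. av (x * y) = av x * av y) \<and>
     (\<forall>x y. av (x + y) \<le> max (av x) (av y))"

definition av_complete :: "('a::field \<Rightarrow> real) \<Rightarrow> bool" where
  "av_complete av \<longleftrightarrow>
     (\<forall>s::nat \<Rightarrow> 'a. (\<forall>e>0. \<exists>N. \<forall>m\<ge>N. \<forall>n\<ge>N. av (s m - s n) < e) \<longrightarrow>
        (\<exists>x. (\<lambda>n. av (s n - x)) \<longlonglongrightarrow> 0))"

definition ps_eval :: "('a::field \<Rightarrow> real) \<Rightarrow> 'a fps \<Rightarrow> 'a \<Rightarrow> 'a" where
  "ps_eval av f z = (THE x. (\<lambda>N. av ((\<Sum>i<N. fps_nth f i * z ^ i) - x)) \<longlonglongrightarrow> 0)"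

definition fps_iter :: "'a::field fps \<Rightarrow> nat \<Rightarrow> 'a fps" where
  "fps_iter f n = ((\<lambda>g. fps_compose g f) ^^ n) fps_X"

text \<open>Weierstrass degree: order of the reduction mod m_K, i.e. the least index of a
  coefficient of absolute value 1 (infinity if there is none).\<close>
definition wideg :: "('a::field \<Rightarrow> real) \<Rightarrow> 'a fps \<Rightarrow> enat" where
  "wideg av h = (if \<exists>n. av (fps_nth h n) = 1 then enat (LEAST n. av (fps_nth h n) = 1) else \<infinity>)"

definition min_periodic :: "('a::field \<Rightarrow> real) \<Rightarrow> 'a fps \<Rightarrow> 'a \<Rightarrow> nat \<Rightarrow> bool" where
  "min_periodic av f w n \<longleftrightarrow> av w < 1 \<and> 0 < n \<and> (ps_eval av f ^^ n) w = w \<and>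
     (\<forall>k. 0 < k \<and> k < n \<longrightarrow> (ps_eval av f ^^ k) w \<noteq> w)"

definition cycle_of :: "('a::field \<Rightarrow> real) \<Rightarrow> 'a fps \<Rightarrow> 'a \<Rightarrow> 'a set" where
  "cycle_of av f w = range (\<lambda>k. (ps_eval av f ^^ k) w)"

end

theory Submission
  imports Defs
begin

unbundle fps_syntax


locale ultra =
  fixes av :: "'a::field \<Rightarrow> real"
  assumes U: "ultrametric_abs av" and Cpl: "av_complete av"
begin

lemma nn[simp]: "0 \<le> av x" using U by (auto simp: ultrametric_abs_def)
lemma av0[simp]: "av 0 = 0" using U by (auto simp: ultrametric_abs_def)
lemma z_iff[simp]: "av x = 0 \<longleftrightarrow> x = 0" using U by (auto simp: ultrametric_abs_def)
lemma mul[simp]: "av (x * y) = av x * av y" using U by (auto simp: ultrametric_abs_def)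
lemma ultra_add: "av (x + y) \<le> max (av x) (av y)" using U by (auto simp: ultrametric_abs_def)
lemma pos[simp]: "0 < av x \<longleftrightarrow> x \<noteq> 0" using nn[of x] z_iff[of x] by linarith
lemma one[simp]: "av 1 = 1"
proof -
  have "av 1 = av 1 * av 1" using mul[of 1 1] by simp
  moreover have "av 1 \<noteq> 0" by simp
  ultimately show ?thesis by (metis mult_cancel_left1)
qed
lemma m1[simp]: "av (-1) = 1"
proof -
  have "av (-1) * av (-1) = 1" using mul[of "-1" "-1"] by simp
  then have "(av (-1) - 1) * (av (-1) + 1) = 0" by (simp add: algebra_simps)
  moreover have "av (-1) + 1 \<noteq> 0" using nn[of "-1"] by linarith
  ultimately show ?thesis by simp
qed
lemma uminus[simp]: "av (- x) = av x" using mul[of "-1" x] by simp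
lemma ultra_diff: "av (x - y) \<le> max (av x) (av y)" using ultra_add[of x "-y"] by simp
lemma commute_diff: "av (x - y) = av (y - x)" by (metis minus_diff_eq uminus)
lemma pow[simp]: "av (x ^ n) = av x ^ n" by (induction n) auto
lemma divide[simp]: "av (x / y) = av x / av y"
proof (cases "y = 0")
  case False
  have "av (x / y) * av y = av x" using mul[of "x/y" y] False by simp
  then show ?thesis using False by (simp add: eq_divide_eq)
qed simp
lemma prod: "av (prod g A) = (\<Prod>i\<in>A. av (g i))"
  by (induction A rule: infinite_finite_induct) auto
lemma sum_bound: "(\<And>i. i \<in> A \<Longrightarrow> av (g i) \<le> c) \<Longrightarrow> 0 \<le> c \<Longrightarrow> av (sum g A) \<le> c"
proof (induction A rule: infinite_finite_induct)
  case (insert x F)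
  then have "av (g x) \<le> c" "av (sum g F) \<le> c" by auto
  then show ?case using ultra_add[of "g x" "sum g F"] insert(1,2)
    by (metis max.bounded_iff order_trans sum.insert)
qed auto
lemma dominate: "av x < av y \<Longrightarrow> av (x + y) = av y"
proof -
  assume a: "av x < av y"
  have "av (x + y) \<le> av y" using ultra_add[of x y] a by simp
  moreover have "av y \<le> max (av (x + y)) (av x)" using ultra_diff[of "x+y" x] by simp
  ultimately show ?thesis using a by linarith
qed

definition bnd :: "'a fps \<Rightarrow> bool" where "bnd g \<longleftrightarrow> (\<forall>i. av (g $ i) \<le> 1)"

lemma bndD: "bnd g \<Longrightarrow> av (g $ i) \<le> 1" by (simp add: bnd_def)
lemma bnd_add: "bnd a \<Longrightarrow> bnd b \<Longrightarrow> bnd (a + b)"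
  unfolding bnd_def by (metis fps_add_nth max.bounded_iff ultra_add order_trans)
lemma bnd_diff: "bnd a \<Longrightarrow> bnd b \<Longrightarrow> bnd (a - b)"
  unfolding bnd_def by (metis fps_sub_nth max.bounded_iff ultra_diff order_trans)
lemma bnd_mult: "bnd a \<Longrightarrow> bnd b \<Longrightarrow> bnd (a * b)"
  unfolding bnd_def fps_mult_nth
  by (intro allI sum_bound) (auto intro: mult_le_one)
lemma bnd_power: "bnd a \<Longrightarrow> bnd (a ^ n)"
proof (induction n)
  case 0 then show ?case by (simp add: bnd_def)
next
  case (Suc n) then show ?case by (simp add: bnd_mult)
qed
lemma bnd_one[simp]: "bnd 1" by (simp add: bnd_def)
lemma bnd_zero[simp]: "bnd 0" by (simp add: bnd_def)
lemma bnd_X[simp]: "bnd fps_X" by (simp add: bnd_def fps_X_def)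
lemma bnd_const: "av c \<le> 1 \<Longrightarrow> bnd (fps_const c)" by (simp add: bnd_def)
lemma bnd_shift: "bnd a \<Longrightarrow> bnd (fps_shift n a)" by (simp add: bnd_def)
lemma bnd_compose: "bnd a \<Longrightarrow> bnd b \<Longrightarrow> bnd (a oo b)"
  unfolding bnd_def fps_compose_nth
  apply (intro allI sum_bound)
   apply (auto intro!: mult_le_one)
  using bnd_power[of b] unfolding bnd_def by auto


abbreviation psum :: "'a fps \<Rightarrow> 'a \<Rightarrow> nat \<Rightarrow> 'a" where
  "psum g z N \<equiv> (\<Sum>i<N. g $ i * z ^ i)"

lemma lim_unique:
  assumes "(\<lambda>N. av (s N - x)) \<longlonglongrightarrow> 0" "(\<lambda>N. av (s N - y)) \<longlonglongrightarrow> 0"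
  shows "x = y"
proof -
  have "(\<lambda>N. av (s N - x) + av (s N - y)) \<longlonglongrightarrow> 0" using tendsto_add[OF assms] by simp
  moreover have "av (x - y) \<le> av (s N - x) + av (s N - y)" for N
  proof -
    have "x - y = (s N - y) - (s N - x)" by simp
    then have "av (x - y) \<le> max (av (s N - y)) (av (s N - x))" using ultra_diff by metis
    then show ?thesis using nn[of "s N - x"] nn[of "s N - y"] by linarith
  qed
  ultimately have "av (x - y) \<le> 0" by (intro LIMSEQ_le_const[where X="\<lambda>N. av (s N - x) + av (s N - y)"]) auto
  then show ?thesis using nn[of "x - y"] by simp
qed

lemma ps_eval_eqI:
  assumes "(\<lambda>N. av (psum g z N - x)) \<longlonglongrightarrow> 0"
  shows "ps_eval av g z = x"
  unfolding ps_eval_def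
  using assms lim_unique by (intro the_equality) auto

lemma psum_split: "n \<le> m \<Longrightarrow> psum g z m = psum g z n + (\<Sum>i\<in>{n..<m}. g $ i * z ^ i)"
  by (metis atLeast0LessThan le0 sum.atLeastLessThan_concat)

lemma psum_tail:
  assumes "bnd g" "av z \<le> 1" "n \<le> m"
  shows "av (psum g z m - psum g z n) \<le> av z ^ n"
proof -
  have "av (\<Sum>i\<in>{n..<m}. g $ i * z ^ i) \<le> av z ^ n"
  proof (rule sum_bound)
    fix i assume "i \<in> {n..<m}"
    then have "av z ^ i \<le> av z ^ n" using assms by (intro power_decreasing) auto
    moreover have "av (g $ i) \<le> 1" using assms bndD by auto
    ultimately show "av (g $ i * z ^ i) \<le> av z ^ n"
      using mult_mono[of "av (g $ i)" 1 "av z ^ i" "av z ^ n"] by simp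
  qed simp
  then show ?thesis using psum_split[OF assms(3), of g z] by simp
qed

lemma conv:
  assumes "bnd g" "av z < 1"
  shows "\<exists>x. (\<lambda>N. av (psum g z N - x)) \<longlonglongrightarrow> 0"
proof -
  have cauchy: "\<forall>e>0. \<exists>N. \<forall>m\<ge>N. \<forall>n\<ge>N. av (psum g z m - psum g z n) < e"
  proof (intro allI impI)
    fix e :: real assume e: "e > 0"
    obtain N where N: "av z ^ N < e" using real_arch_pow_inv[OF e assms(2)] by auto
    have "av (psum g z m - psum g z n) < e" if "m \<ge> N" "n \<ge> N" for m n
    proof (cases "n \<le> m")
      case True
      have "av z ^ n \<le> av z ^ N" using that assms by (intro power_decreasing) auto
      then show ?thesis using psum_tail[OF assms(1) _ True, of z] assms N by linarith
    next
      case False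
      have "av z ^ m \<le> av z ^ N" using that assms by (intro power_decreasing) auto
      then show ?thesis using psum_tail[OF assms(1), of z m n] False assms N commute_diff by fastforce
    qed
    then show "\<exists>N. \<forall>m\<ge>N. \<forall>n\<ge>N. av (psum g z m - psum g z n) < e" by blast
  qed
  show ?thesis using spec[OF Cpl[unfolded av_complete_def], of "\<lambda>N. psum g z N"] cauchy by blast
qed

lemma ev_lim:
  assumes "bnd g" "av z < 1"
  shows "(\<lambda>N. av (psum g z N - ps_eval av g z)) \<longlonglongrightarrow> 0"
proof -
  obtain x where x: "(\<lambda>N. av (psum g z N - x)) \<longlonglongrightarrow> 0" using conv[OF assms] by blast
  then show ?thesis using ps_eval_eqI[OF x] by simp
qed

lemma ev_bound:
  assumes "bnd g" "av z < 1"
  shows "av (ps_eval av g z - psum g z N) \<le> av z ^ N"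
proof (rule ccontr)
  let ?x = "ps_eval av g z"
  assume "\<not> ?thesis"
  then have d: "av (?x - psum g z N) > av z ^ N" by simp
  have "\<forall>\<^sub>F m in sequentially. av (psum g z m - ?x) < av (?x - psum g z N)"
  proof (rule order_tendstoD(2)[OF ev_lim[OF assms]])
    show "0 < av (?x - psum g z N)" using d zero_le_power[OF nn[of z], of N] by linarith
  qed
  then obtain M where M: "\<forall>m\<ge>M. av (psum g z m - ?x) < av (?x - psum g z N)"
    unfolding eventually_sequentially by blast
  define m where "m = max M N"
  have m: "m \<ge> N" "av (psum g z m - ?x) < av (?x - psum g z N)" using M unfolding m_def by auto
  have "?x - psum g z N = (psum g z m - psum g z N) - (psum g z m - ?x)" by simp
  then have "av (?x - psum g z N) \<le> max (av (psum g z m - psum g z N)) (av (psum g z m - ?x))"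
    using ultra_diff[of "psum g z m - psum g z N" "psum g z m - ?x"] by simp
  moreover have "av (psum g z m - psum g z N) \<le> av z ^ N" using psum_tail[OF assms(1) _ m(1)] assms by simp
  ultimately show False using d m by linarith
qed

lemma ev_le1: "bnd g \<Longrightarrow> av z < 1 \<Longrightarrow> av (ps_eval av g z) \<le> 1"
  using ev_bound[of g z 0] by simp

end

lemma decomp: "a = fps_const (a $ 0) + fps_X * fps_shift 1 (a :: 'a::field fps)"
proof (rule fps_ext)
  fix n show "a $ n = (fps_const (a $ 0) + fps_X * fps_shift 1 a) $ n"
    by (cases n) simp_all
qed

context ultra begin

lemma lim0_add:
  assumes a: "(\<lambda>N. av (u N)) \<longlonglongrightarrow> 0" "(\<lambda>N. av (v N)) \<longlonglongrightarrow> 0"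
  shows "(\<lambda>N. av (u N + v N)) \<longlonglongrightarrow> 0"
proof (rule tendsto_sandwich[of "\<lambda>_. 0" _ sequentially "\<lambda>N. av (u N) + av (v N)"])
  show "\<forall>\<^sub>F N in sequentially. 0 \<le> av (u N + v N)" by simp
  show "\<forall>\<^sub>F N in sequentially. av (u N + v N) \<le> av (u N) + av (v N)"
  proof (rule always_eventually, rule allI)
    fix N show "av (u N + v N) \<le> av (u N) + av (v N)"
      using ultra_add[of "u N" "v N"] by (rule order_trans) simp
  qed
  show "(\<lambda>_. 0) \<longlonglongrightarrow> (0::real)" by simp
  show "(\<lambda>N. av (u N) + av (v N)) \<longlonglongrightarrow> 0" using tendsto_add[OF a] by simp
qed

lemma lim0_cmult: "(\<lambda>N. av (u N)) \<longlonglongrightarrow> 0 \<Longrightarrow> (\<lambda>N. av (c * u N)) \<longlonglongrightarrow> 0"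
  using tendsto_mult_right_zero[of "\<lambda>N. av (u N)" sequentially "av c"] by simp

lemma ev_eventually:
  assumes "\<And>N. N \<ge> K \<Longrightarrow> psum g z N = x"
  shows "ps_eval av g z = x"
proof (rule ps_eval_eqI)
  have "\<forall>\<^sub>F N in sequentially. av (psum g z N - x) = 0" unfolding eventually_sequentially using assms by auto
  then show "(\<lambda>N. av (psum g z N - x)) \<longlonglongrightarrow> 0" by (rule tendsto_eventually)
qed

lemma ev_X: "ps_eval av fps_X z = z"
proof (rule ev_eventually[of 2])
  fix N :: nat assume "N \<ge> 2"
  then have "1 \<in> {..<N}" by simp
  have "psum fps_X z N = (\<Sum>i<N. if i = 1 then z else 0)" by (intro sum.cong) auto
  then show "psum fps_X z N = z" using \<open>1 \<in> {..<N}\<close> by simp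
qed

lemma ev_const: "ps_eval av (fps_const c) z = c"
proof (rule ev_eventually[of 1])
  fix N :: nat assume "N \<ge> 1"
  then have "0 \<in> {..<N}" by simp
  have "psum (fps_const c) z N = (\<Sum>i<N. if i = 0 then c else 0)" by (intro sum.cong) auto
  then show "psum (fps_const c) z N = c" using \<open>0 \<in> {..<N}\<close> by simp
qed

lemma ev_one: "ps_eval av 1 z = 1"
  using ev_const[of 1 z] by simp

lemma ev_zero: "ps_eval av 0 z = 0"
  using ev_const[of 0 z] by simp

lemma ev_add:
  assumes "bnd a" "bnd b" "av z < 1"
  shows "ps_eval av (a + b) z = ps_eval av a z + ps_eval av b z"
proof (rule ps_eval_eqI)
  have e: "(\<lambda>N. av (psum (a + b) z N - (ps_eval av a z + ps_eval av b z))) =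
     (\<lambda>N. av ((psum a z N - ps_eval av a z) + (psum b z N - ps_eval av b z)))"
    by (rule ext) (simp add: sum.distrib algebra_simps)
  show "(\<lambda>N. av (psum (a + b) z N - (ps_eval av a z + ps_eval av b z))) \<longlonglongrightarrow> 0"
    unfolding e by (rule lim0_add[OF ev_lim[OF assms(1,3)] ev_lim[OF assms(2,3)]])
qed

lemma ev_uminus:
  assumes "bnd a" "av z < 1"
  shows "ps_eval av (- a) z = - ps_eval av a z"
proof (rule ps_eval_eqI)
  have e: "(\<lambda>N. av (psum (- a) z N - - ps_eval av a z)) = (\<lambda>N. av (psum a z N - ps_eval av a z))"
  proof (rule ext)
    fix N
    have "psum (- a) z N - - ps_eval av a z = - (psum a z N - ps_eval av a z)"
      by (simp add: sum_negf)
    then show "av (psum (- a) z N - - ps_eval av a z) = av (psum a z N - ps_eval av a z)"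
      by (metis uminus)
  qed
  show "(\<lambda>N. av (psum (- a) z N - - ps_eval av a z)) \<longlonglongrightarrow> 0"
    unfolding e by (rule ev_lim[OF assms])
qed

lemma ev_diff:
  assumes "bnd a" "bnd b" "av z < 1"
  shows "ps_eval av (a - b) z = ps_eval av a z - ps_eval av b z"
  using ev_add[OF assms(1) _ assms(3), of "-b"] ev_uminus[OF assms(2,3)] assms(2)
  by (simp add: bnd_def)

lemma ev_cmult:
  assumes "bnd a" "av z < 1"
  shows "ps_eval av (fps_const c * a) z = c * ps_eval av a z"
proof (rule ps_eval_eqI)
  have "psum (fps_const c * a) z N - c * ps_eval av a z = c * (psum a z N - ps_eval av a z)" for N
    by (simp add: sum_distrib_left algebra_simps)
  then show "(\<lambda>N. av (psum (fps_const c * a) z N - c * ps_eval av a z)) \<longlonglongrightarrow> 0"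
    using lim0_cmult[OF ev_lim[OF assms]] by simp
qed

lemma ev_shift:
  assumes "bnd g" "av z < 1"
  shows "ps_eval av g z = g $ 0 + z * ps_eval av (fps_shift 1 g) z"
proof (rule ps_eval_eqI)
  let ?y = "ps_eval av (fps_shift 1 g) z"
  have ps: "psum g z (Suc N) = g $ 0 + z * psum (fps_shift 1 g) z N" for N
    by (subst sum.lessThan_Suc_shift) (simp add: sum_distrib_left mult.assoc mult.left_commute)
  have e: "psum g z (Suc N) - (g $ 0 + z * ?y) = z * (psum (fps_shift 1 g) z N - ?y)" for N
    unfolding ps by (simp add: algebra_simps)
  have "(\<lambda>N. av (psum g z (Suc N) - (g $ 0 + z * ?y))) \<longlonglongrightarrow> 0"
    unfolding e by (rule lim0_cmult[OF ev_lim[OF bnd_shift[OF assms(1)] assms(2)]])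
  then show "(\<lambda>N. av (psum g z N - (g $ 0 + z * ?y))) \<longlonglongrightarrow> 0"
    by (rule LIMSEQ_imp_Suc)
qed

lemma ev_Xmult:
  assumes "bnd h" "av z < 1"
  shows "ps_eval av (fps_X * h) z = z * ps_eval av h z"
proof -
  have "bnd (fps_X * h)" using assms bnd_mult by simp
  have "fps_shift 1 (fps_X * h) = h" by (metis fps_shift_times_fps_X' mult.commute)
  with ev_shift[OF \<open>bnd (fps_X * h)\<close> assms(2)] show ?thesis by simp
qed

lemma ev_mult:
  assumes "bnd a" "bnd b" "av z < 1"
  shows "ps_eval av (a * b) z = ps_eval av a z * ps_eval av b z"
proof -
  define D where "D a = ps_eval av (a * b) z - ps_eval av a z * ps_eval av b z" for a
  have step: "D a = z * D (fps_shift 1 a)" if "bnd a" for a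
  proof -
    let ?a' = "fps_shift 1 a"
    have ba': "bnd ?a'" using that bnd_shift by auto
    have "a * b = fps_const (a $ 0) * b + fps_X * (?a' * b)"
      by (subst decomp[of a]) (simp add: algebra_simps)
    have b1: "bnd (fps_const (a $ 0) * b)" using bnd_mult bnd_const bndD that assms(2) by blast
    have b2: "bnd (?a' * b)" using bnd_mult ba' assms(2) by blast
    have b3: "bnd (fps_X * (?a' * b))" using bnd_mult b2 bnd_X by blast
    have "ps_eval av (a * b) z = ps_eval av (fps_const (a $ 0) * b) z + ps_eval av (fps_X * (?a' * b)) z"
      using ev_add[OF b1 b3 assms(3)] \<open>a * b = _\<close> by simp
    also have "\<dots> = a $ 0 * ps_eval av b z + z * ps_eval av (?a' * b) z"
      using ev_cmult[OF assms(2,3)] ev_Xmult[OF b2 assms(3)] by simp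
    finally have "ps_eval av (a * b) z = a $ 0 * ps_eval av b z + z * ps_eval av (?a' * b) z" .
    moreover have "ps_eval av a z = a $ 0 + z * ps_eval av ?a' z" using ev_shift that assms(3) by blast
    ultimately show ?thesis unfolding D_def by (simp add: algebra_simps)
  qed
  have bd: "av (D a) \<le> av z ^ n" if "bnd a" for a n
    using that
  proof (induction n arbitrary: a)
    case 0
    have "av (ps_eval av (a * b) z) \<le> 1" using ev_le1 bnd_mult 0 assms by blast
    moreover have "av (ps_eval av a z * ps_eval av b z) \<le> 1"
      using ev_le1[OF 0 assms(3)] ev_le1[OF assms(2,3)] by (simp add: mult_le_one)
    ultimately show ?case unfolding D_def
      using ultra_diff[of "ps_eval av (a * b) z" "ps_eval av a z * ps_eval av b z"] by simp
  next
    case (Suc n)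
    have "av (D (fps_shift 1 a)) \<le> av z ^ n" using Suc bnd_shift by blast
    then show ?case using step[OF Suc.prems] by (simp add: mult_left_mono)
  qed
  have "av (D a) \<le> 0"
  proof (rule LIMSEQ_le_const[OF LIMSEQ_power_zero[of "av z"]])
    show "norm (av z) < 1" using assms by simp
    show "\<exists>N. \<forall>n\<ge>N. av (D a) \<le> av z ^ n" using bd assms by blast
  qed
  then have "av (D a) = 0" using nn[of "D a"] by linarith
  then show ?thesis unfolding D_def by simp
qed

lemma ev_power:
  assumes "bnd a" "av z < 1"
  shows "ps_eval av (a ^ n) z = ps_eval av a z ^ n"
  by (induction n) (simp_all add: ev_one ev_mult assms bnd_power)

end


lemma iter_0[simp]: "fps_iter f 0 = fps_X" by (simp add: fps_iter_def)
lemma iter_Suc: "fps_iter f (Suc n) = fps_iter f n oo f" by (simp add: fps_iter_def)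
lemma iter_nth0: "f $ 0 = 0 \<Longrightarrow> fps_iter f n $ 0 = 0"
  by (induction n) (simp_all add: iter_Suc)
lemma compose_nth1: "(g oo f) $ Suc 0 = g $ Suc 0 * (f $ Suc 0 :: 'a::field)"
  by (simp add: fps_compose_nth)
lemma iter_nth1: "f $ 0 = 0 \<Longrightarrow> fps_iter f n $ 1 = (f $ 1 :: 'a::field) ^ n"
  by (induction n) (simp_all add: iter_Suc compose_nth1 mult.commute)
lemma iter_add: "f $ 0 = (0::'a::field) \<Longrightarrow> fps_iter f (m + n) = fps_iter f m oo fps_iter f n"
proof (induction n)
  case 0 then show ?case by simp
next
  case (Suc n)
  have "fps_iter f (m + Suc n) = fps_iter f (m + n) oo f" by (simp add: iter_Suc)
  also have "\<dots> = (fps_iter f m oo fps_iter f n) oo f" using Suc by simp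
  also have "\<dots> = fps_iter f m oo (fps_iter f n oo f)"
    using fps_compose_assoc[of f "fps_iter f n" "fps_iter f m"] Suc.prems iter_nth0 by metis
  finally show ?case by (simp add: iter_Suc)
qed
lemma iter_mult: "f $ 0 = (0::'a::field) \<Longrightarrow> fps_iter f (m * k) = fps_iter (fps_iter f m) k"
proof (induction k)
  case 0 then show ?case by simp
next
  case (Suc k)
  have "fps_iter f (m * Suc k) = fps_iter f (m * k + m)" by (simp add: add.commute)
  also have "\<dots> = fps_iter f (m * k) oo fps_iter f m" using iter_add Suc.prems by blast
  finally show ?case using Suc by (simp add: iter_Suc)
qed

context ultra begin

lemma bnd_iter: "bnd f \<Longrightarrow> bnd (fps_iter f n)"
  by (induction n) (simp_all add: iter_Suc bnd_compose)

lemma lim0_bound: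
  assumes "\<And>N. av (u N) \<le> b N" "b \<longlonglongrightarrow> 0"
  shows "(\<lambda>N. av (u N)) \<longlonglongrightarrow> 0"
proof (rule tendsto_sandwich[of "\<lambda>_. 0" _ sequentially b])
  show "\<forall>\<^sub>F N in sequentially. 0 \<le> av (u N)" by simp
  show "\<forall>\<^sub>F N in sequentially. av (u N) \<le> b N" using assms(1) by (intro always_eventually allI)
qed (use assms in auto)

lemma ev_small:
  assumes "bnd f" "f $ 0 = 0" "av z < 1"
  shows "av (ps_eval av f z) \<le> av z"
  using ev_bound[OF assms(1,3), of 1] assms(2) by simp

lemma ev_compose:
  assumes g: "bnd g" and f: "bnd f" "f $ 0 = 0" and z: "av z < 1"
  shows "ps_eval av (g oo f) z = ps_eval av g (ps_eval av f z)"
proof (rule ps_eval_eqI)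
  define y where "y = ps_eval av f z"
  have y: "av y < 1" using ev_small[OF f z] z unfolding y_def by linarith
  have C: "psum (g oo f) z N = (\<Sum>i<N. g $ i * psum (f ^ i) z N)" for N
  proof -
    have "psum (g oo f) z N = (\<Sum>n<N. \<Sum>i\<in>{0..n}. g $ i * (f ^ i) $ n * z ^ n)"
      by (simp add: fps_compose_nth sum_distrib_right)
    also have "\<dots> = (\<Sum>n<N. \<Sum>i<N. g $ i * (f ^ i) $ n * z ^ n)"
    proof (rule sum.cong[OF refl])
      fix n assume n: "n \<in> {..<N}"
      show "(\<Sum>i\<in>{0..n}. g $ i * (f ^ i) $ n * z ^ n) = (\<Sum>i<N. g $ i * (f ^ i) $ n * z ^ n)"
      proof (rule sum.mono_neutral_left)
        show "{0..n} \<subseteq> {..<N}" using n by auto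
        show "\<forall>i\<in>{..<N} - {0..n}. g $ i * (f ^ i) $ n * z ^ n = 0"
          using startsby_zero_power_prefix[OF f(2)] by auto
      qed auto
    qed
    also have "\<dots> = (\<Sum>i<N. \<Sum>n<N. g $ i * (f ^ i) $ n * z ^ n)" by (rule sum.swap)
    also have "\<dots> = (\<Sum>i<N. g $ i * psum (f ^ i) z N)"
      by (simp add: sum_distrib_left mult.assoc)
    finally show ?thesis .
  qed
  have b1: "av (psum (g oo f) z N - psum g y N) \<le> av z ^ N" for N
  proof -
    have "psum (g oo f) z N - psum g y N = (\<Sum>i<N. g $ i * (psum (f ^ i) z N - ps_eval av (f ^ i) z))"
      unfolding C ev_power[OF f(1) z] y_def by (simp add: sum_subtractf algebra_simps)
    also have "av \<dots> \<le> av z ^ N"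
    proof (rule sum_bound)
      fix i
      have "av (psum (f ^ i) z N - ps_eval av (f ^ i) z) \<le> av z ^ N"
        using ev_bound[OF bnd_power[OF f(1)] z, of i N] commute_diff by metis
      moreover have "av (g $ i) \<le> 1" using g bndD by blast
      ultimately show "av (g $ i * (psum (f ^ i) z N - ps_eval av (f ^ i) z)) \<le> av z ^ N"
        using mult_mono[of "av (g $ i)" 1 "av (psum (f ^ i) z N - ps_eval av (f ^ i) z)" "av z ^ N"]
        by simp
    qed simp
    finally show ?thesis .
  qed
  have l1: "(\<lambda>N. av (psum (g oo f) z N - psum g y N)) \<longlonglongrightarrow> 0"
    by (rule lim0_bound[OF b1]) (rule LIMSEQ_power_zero, use z in simp)
  have "(\<lambda>N. av ((psum (g oo f) z N - psum g y N) + (psum g y N - ps_eval av g y))) \<longlonglongrightarrow> 0"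
    by (rule lim0_add[OF l1 ev_lim[OF g y]])
  then show "(\<lambda>N. av (psum (g oo f) z N - ps_eval av g (ps_eval av f z))) \<longlonglongrightarrow> 0"
    unfolding y_def by simp
qed

lemma ev_iter:
  assumes f: "bnd f" "f $ 0 = 0" and w: "av w < 1"
  shows "ps_eval av (fps_iter f n) w = (ps_eval av f ^^ n) w"
  using w
proof (induction n arbitrary: w)
  case 0 then show ?case by (simp add: ev_X)
next
  case (Suc n)
  have w': "av (ps_eval av f w) < 1" using ev_small[OF f Suc.prems] Suc.prems by linarith
  have "ps_eval av (fps_iter f (Suc n)) w = ps_eval av (fps_iter f n) (ps_eval av f w)"
    unfolding iter_Suc using ev_compose[OF bnd_iter[OF f(1)] f Suc.prems] .
  also have "\<dots> = (ps_eval av f ^^ n) (ps_eval av f w)" using Suc.IH[OF w'] .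
  finally show ?case by (simp only: funpow_Suc_right comp_def)
qed

lemma ev_isometry:
  assumes f: "bnd f" "f $ 0 = 0" "av (f $ 1) = 1" and w: "av w < 1"
  shows "av (ps_eval av f w) = av w"
proof -
  let ?y = "ps_eval av f w"
  have b: "av (?y - f $ 1 * w) \<le> av w ^ 2"
    using ev_bound[OF f(1) w, of 2] f(2) by (simp add: numeral_2_eq_2)
  show ?thesis
  proof (cases "w = 0")
    case True
    then have "av ?y \<le> 0" using ev_small[OF f(1,2) w] by simp
    then have "av ?y = 0" using nn[of ?y] by linarith
    then show ?thesis using True by simp
  next
    case False
    then have "av w ^ 2 < av w" using w by (simp add: power2_eq_square)
    then have "av (?y - f $ 1 * w) < av (f $ 1 * w)" using b f(3) by simp
    from dominate[OF this] show ?thesis using f(3) by simp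
  qed
qed

end


lemma lin_nth0: "((fps_X - fps_const a) * h) $ 0 = - a * (h $ 0 :: 'a::field)"
  by simp
lemma lin_nthS: "((fps_X - fps_const a) * h) $ Suc k = h $ k - a * (h $ Suc k :: 'a::field)"
  by (simp add: algebra_simps)

context ultra begin

definition wd :: "'a fps \<Rightarrow> nat \<Rightarrow> bool" where
  "wd g d \<longleftrightarrow> av (g $ d) = 1 \<and> (\<forall>j<d. av (g $ j) < 1)"

lemma wideg_eq:
  assumes "bnd g"
  shows "wideg av g = enat d \<longleftrightarrow> wd g d"
proof
  assume a: "wideg av g = enat d"
  then have ex: "\<exists>n. av (g $ n) = 1" unfolding wideg_def by (auto split: if_splits)
  with a have d: "d = (LEAST n. av (g $ n) = 1)" unfolding wideg_def by auto
  have "av (g $ d) = 1" unfolding d by (rule LeastI_ex[OF ex])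
  moreover have "av (g $ j) < 1" if "j < d" for j
    using not_less_Least[OF that[unfolded d]] bndD[OF assms, of j] by linarith
  ultimately show "wd g d" unfolding wd_def by blast
next
  assume w: "wd g d"
  then have "(LEAST n. av (g $ n) = 1) = d"
    unfolding wd_def by (intro Least_equality) (auto simp: not_less[symmetric])
  then show "wideg av g = enat d" using w unfolding wideg_def wd_def by auto
qed

lemma small_prod: "av a < 1 \<Longrightarrow> av b \<le> 1 \<Longrightarrow> av (a * b) < 1"
  using mult_left_le[of "av b" "av a"] by simp

lemma factor1:
  assumes g: "bnd g" and a: "av a < 1" and r: "ps_eval av g a = 0"
  shows "\<exists>g1. bnd g1 \<and> g = (fps_X - fps_const a) * g1"
proof -
  define g1 where "g1 = Abs_fps (\<lambda>k. ps_eval av (fps_shift (Suc k) g) a)"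
  have b: "bnd g1" unfolding bnd_def g1_def using ev_le1[OF bnd_shift[OF g] a] by simp
  have sh: "ps_eval av (fps_shift k g) a = g $ k + a * ps_eval av (fps_shift (Suc k) g) a" for k
  proof -
    have "fps_shift 1 (fps_shift k g) = fps_shift (Suc k) g" using fps_shift_fps_shift[of 1 k g] by simp
    then show ?thesis using ev_shift[OF bnd_shift[OF g] a, of k] by simp
  qed
  have "g = (fps_X - fps_const a) * g1"
  proof (rule fps_ext)
    fix n show "g $ n = ((fps_X - fps_const a) * g1) $ n"
    proof (cases n)
      case 0
      have "ps_eval av (fps_shift 0 g) a = 0" using r by simp
      then have "g $ 0 + a * ps_eval av (fps_shift (Suc 0) g) a = 0" using sh[of 0] by simp
      then have "g $ 0 = - (a * ps_eval av (fps_shift (Suc 0) g) a)" by (simp add: eq_neg_iff_add_eq_0)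
      then show ?thesis using 0 unfolding lin_nth0 g1_def by simp
    next
      case (Suc k)
      show ?thesis using sh[of "Suc k"] Suc unfolding lin_nthS g1_def by (simp add: algebra_simps)
    qed
  qed
  with b show ?thesis by blast
qed

lemma bnd_lin: "av a < 1 \<Longrightarrow> bnd (fps_X - fps_const a)"
  by (intro bnd_diff bnd_X bnd_const) simp

lemma ev_lin: "av z < 1 \<Longrightarrow> av a \<le> 1 \<Longrightarrow> ps_eval av (fps_X - fps_const a) z = z - a"
  using ev_diff[OF bnd_X bnd_const[of a], of z] ev_X ev_const by simp

lemma wd_lin:
  assumes h: "bnd h" and a: "av a < 1"
  shows "wd ((fps_X - fps_const a) * h) (Suc d) \<longleftrightarrow> wd h d"
    and "\<not> wd ((fps_X - fps_const a) * h) 0"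
proof -
  let ?c = "(fps_X - fps_const a) * h"
  have s: "av (a * h $ j) < 1" for j using small_prod[OF a bndD[OF h]] .
  have cS: "?c $ Suc k = h $ k + - (a * h $ Suc k)" for k using lin_nthS[of a h k] by simp
  have hk: "h $ k = ?c $ Suc k + a * h $ Suc k" for k using lin_nthS[of a h k] by simp
  show "\<not> wd ?c 0" unfolding wd_def using s[of 0] by simp
  show "wd ?c (Suc d) \<longleftrightarrow> wd h d"
  proof
    assume w: "wd ?c (Suc d)"
    have "av (h $ d) = 1"
      using dominate[of "a * h $ Suc d" "?c $ Suc d"] s[of "Suc d"] w hk[of d]
      unfolding wd_def by (simp add: add.commute)
    moreover have "av (h $ j) < 1" if "j < d" for j
    proof -
      have "av (?c $ Suc j) < 1" using w that unfolding wd_def by auto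
      then show ?thesis using hk[of j] ultra_add[of "?c $ Suc j" "a * h $ Suc j"] s[of "Suc j"] by simp
    qed
    ultimately show "wd h d" unfolding wd_def by blast
  next
    assume w: "wd h d"
    have "av (?c $ Suc d) = 1"
      using dominate[of "- (a * h $ Suc d)" "h $ d"] s[of "Suc d"] w cS[of d]
      unfolding wd_def by (simp add: add.commute)
    moreover have "av (?c $ j) < 1" if "j < Suc d" for j
    proof (cases j)
      case 0 then show ?thesis using s[of 0] by simp
    next
      case (Suc k)
      then have "av (h $ k) < 1" using w that unfolding wd_def by auto
      then show ?thesis using Suc cS[of k] ultra_add[of "h $ k" "- (a * h $ Suc k)"] s[of "Suc k"] by simp
    qed
    ultimately show "wd ?c (Suc d)" unfolding wd_def by blast
  qed
qed

abbreviation P :: "'a set \<Rightarrow> 'a fps" where "P S \<equiv> (\<Prod>w\<in>S. fps_X - fps_const w)"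

lemma bnd_P: "(\<And>w. w \<in> S \<Longrightarrow> av w < 1) \<Longrightarrow> bnd (P S)"
  by (induction S rule: infinite_finite_induct) (auto intro: bnd_mult bnd_lin)

lemma ev_P: "finite S \<Longrightarrow> (\<And>w. w \<in> S \<Longrightarrow> av w < 1) \<Longrightarrow> av z < 1 \<Longrightarrow>
    ps_eval av (P S) z = (\<Prod>w\<in>S. z - w)"
proof (induction S rule: finite_induct)
  case empty then show ?case by (simp add: ev_one)
next
  case (insert x F)
  have "ps_eval av (P (insert x F)) z = ps_eval av ((fps_X - fps_const x) * P F) z"
    using insert by simp
  also have "\<dots> = (z - x) * ps_eval av (P F) z"
  proof -
    have ax: "av x < 1" using insert(4) by simp
    show ?thesis using ev_mult[OF bnd_lin[OF ax] bnd_P insert(5)] ev_lin[OF insert(5) less_imp_le[OF ax]] insert(4) by simp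
  qed
  finally show ?case using insert by simp
qed

lemma P_nth0: "P S $ 0 = (\<Prod>w\<in>S. - w)"
  by (induction S rule: infinite_finite_induct) auto

lemma multi_factor:
  "finite S \<Longrightarrow> (\<And>w. w \<in> S \<Longrightarrow> av w < 1) \<Longrightarrow> (\<And>w. w \<in> S \<Longrightarrow> ps_eval av g w = 0) \<Longrightarrow> bnd g \<Longrightarrow>
   \<exists>G. bnd G \<and> g = P S * G"
proof (induction S arbitrary: g rule: finite_induct)
  case empty then show ?case by auto
next
  case (insert x F)
  obtain g1 where g1: "bnd g1" "g = (fps_X - fps_const x) * g1"
    using factor1[OF insert(6)] insert(4,5) by blast
  have "ps_eval av g1 w = 0" if w: "w \<in> F" for w
  proof -
    have aw: "av w < 1" using insert(4) w by auto
    have "0 = ps_eval av g w" using insert(5) w by auto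
    also have "\<dots> = (w - x) * ps_eval av g1 w"
    proof -
      have ax: "av x < 1" using insert(4) by simp
      show ?thesis unfolding g1(2) using ev_mult[OF bnd_lin[OF ax] g1(1) aw] ev_lin[OF aw less_imp_le[OF ax]] by simp
    qed
    finally show ?thesis using insert(2) w by auto
  qed
  then obtain G where G: "bnd G" "g1 = P F * G" using insert(3)[OF _ _ g1(1)] insert(4) by blast
  have "g = P (insert x F) * G" using G g1 insert(1,2) by (simp add: mult.assoc)
  with G show ?case by blast
qed

lemma wd_P:
  "finite S \<Longrightarrow> (\<And>w. w \<in> S \<Longrightarrow> av w < 1) \<Longrightarrow> bnd G \<Longrightarrow> wd (P S * G) (card S + d) \<longleftrightarrow> wd G d"
proof (induction S rule: finite_induct)
  case empty then show ?case by simp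
next
  case (insert x F)
  have eqP: "P (insert x F) = (fps_X - fps_const x) * P F" using insert(1,2) by simp
  have eqPG: "P (insert x F) * G = (fps_X - fps_const x) * (P F * G)" by (simp only: eqP mult.assoc)
  moreover have "bnd (P F * G)" using bnd_mult[OF bnd_P insert(5)] insert(4) by blast
  moreover have "av x < 1" using insert(4) by simp
  ultimately have "wd (P (insert x F) * G) (Suc (card F + d)) = wd (P F * G) (card F + d)"
    unfolding eqPG using wd_lin(1)[of "P F * G" x "card F + d"] by simp
  then show ?case using insert by simp
qed

lemma unit_nonzero:
  assumes "bnd G" "av (G $ 0) = 1" "av z < 1"
  shows "ps_eval av G z \<noteq> 0"
proof
  assume e: "ps_eval av G z = 0"
  have "av (ps_eval av G z - G $ 0) \<le> av z" using ev_bound[OF assms(1,3), of 1] by simp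
  then show False using e assms by simp
qed

end


context ultra begin

lemma compose_diff:
  assumes u: "bnd u" "u $ 0 = 0" and B: "bnd B"
  shows "\<exists>E. bnd E \<and> (B oo u) - B = (u - fps_X) * E"
proof -
  define D where "D j = (\<Sum>i<j. fps_X ^ (j - Suc i) * u ^ i)" for j
  have Dz: "D j $ k = 0" if "Suc k < j" for j k
  proof -
    have "(fps_X ^ (j - Suc i) * u ^ i) $ k = 0" if "i < j" for i
    proof (cases "k < j - Suc i")
      case True then show ?thesis by (simp add: fps_X_power_mult_nth)
    next
      case False
      then have "k - (j - Suc i) < i" using \<open>Suc k < j\<close> that by linarith
      then show ?thesis using False startsby_zero_power_prefix[OF u(2)] by (simp add: fps_X_power_mult_nth)
    qed
    then show ?thesis unfolding D_def fps_sum_nth by simp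
  qed
  have bD: "bnd (D j)" for j
    unfolding bnd_def D_def fps_sum_nth
    by (intro allI sum_bound) (auto intro!: bndD bnd_mult bnd_power u(1))
  have Dd: "u ^ j - fps_X ^ j = (u - fps_X) * D j" for j
    unfolding D_def by (rule power_diff_sumr2)
  define En where "En n = (\<Sum>j<n. fps_const (B $ j) * D j)" for n
  define E where "E = Abs_fps (\<lambda>k. En (k + 2) $ k)"
  have Ek: "E $ k = En n $ k" if "k + 2 \<le> n" for k n
  proof -
    have "En n $ k = (\<Sum>j<n. B $ j * D j $ k)" unfolding En_def fps_sum_nth by simp
    also have "\<dots> = (\<Sum>j<k+2. B $ j * D j $ k)"
      by (rule sum.mono_neutral_right) (use that Dz in auto)
    also have "\<dots> = En (k + 2) $ k" unfolding En_def fps_sum_nth by simp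
    finally show ?thesis unfolding E_def by simp
  qed
  have bE: "bnd E"
    unfolding bnd_def
  proof
    fix k
    have "E $ k = (\<Sum>j<k+2. B $ j * D j $ k)"
      by (simp only: E_def En_def fps_sum_nth fps_nth_Abs_fps fps_mult_left_const_nth)
    also have "av \<dots> \<le> 1"
      by (rule sum_bound) (auto intro!: mult_le_one bndD[OF B] bndD[OF bD])
    finally show "av (E $ k) \<le> 1" .
  qed
  have "(B oo u) - B = (u - fps_X) * E"
  proof (rule fps_ext)
    fix n
    have "((u - fps_X) * E) $ n = ((u - fps_X) * En (n + 2)) $ n"
      unfolding fps_mult_nth by (intro sum.cong refl) (simp add: Ek)
    also have "(u - fps_X) * En (n + 2) = (\<Sum>j<n+2. fps_const (B $ j) * (u ^ j - fps_X ^ j))"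
      unfolding En_def Dd by (simp add: sum_distrib_left algebra_simps)
    also have "\<dots> $ n = (\<Sum>j<n+2. B $ j * (u ^ j) $ n) - (\<Sum>j<n+2. B $ j * (fps_X ^ j) $ n)"
      unfolding fps_sum_nth by (simp add: algebra_simps sum_subtractf)
    also have "(\<Sum>j<n+2. B $ j * (u ^ j) $ n) = (\<Sum>j\<in>{0..n}. B $ j * (u ^ j) $ n)"
      by (rule sum.mono_neutral_right) (auto simp: startsby_zero_power_prefix[OF u(2)])
    also have "\<dots> = (B oo u) $ n" by (simp add: fps_compose_nth)
    also have "(\<Sum>j<n+2. B $ j * (fps_X ^ j) $ n) = B $ n"
    proof -
      have "(\<Sum>j<n+2. B $ j * (fps_X ^ j) $ n) = (\<Sum>j<n+2. if j = n then B $ n else 0)"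
        by (intro sum.cong) auto
      then show ?thesis by simp
    qed
    finally show "((B oo u) - B) $ n = ((u - fps_X) * E) $ n" by simp
  qed
  with bE show ?thesis by blast
qed

lemma iter_divisible:
  assumes u: "bnd u" "u $ 0 = 0"
  shows "\<exists>c. bnd c \<and> fps_iter u k - fps_X = (u - fps_X) * c"
proof (induction k)
  case 0 show ?case by (intro exI[of _ 0]) simp
next
  case (Suc k)
  then obtain c where c: "bnd c" "fps_iter u k - fps_X = (u - fps_X) * c" by blast
  obtain E where E: "bnd E" "((u - fps_X) oo u) - (u - fps_X) = (u - fps_X) * E"
    using compose_diff[OF u bnd_diff[OF u(1) bnd_X]] by blast
  have "(fps_iter u k - fps_X) oo u = fps_iter u (Suc k) - u"
    using u(2) by (simp add: iter_Suc fps_compose_sub_distrib)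
  then have "fps_iter u (Suc k) - fps_X = ((fps_iter u k - fps_X) oo u) + (u - fps_X)"
    by simp
  also have "\<dots> = ((u - fps_X) oo u) * (c oo u) + (u - fps_X)"
    unfolding c(2) by (simp add: fps_compose_mult_distrib[OF u(2)])
  also have "(u - fps_X) oo u = (u - fps_X) * (1 + E)" using E(2) by (simp add: algebra_simps)
  finally have "fps_iter u (Suc k) - fps_X = (u - fps_X) * ((1 + E) * (c oo u) + 1)"
    by (simp add: algebra_simps)
  moreover have "bnd ((1 + E) * (c oo u) + 1)"
    by (intro bnd_add bnd_mult bnd_compose c(1) u(1) E(1) bnd_one)
  ultimately show ?case by blast
qed

end


lemma powr_root_eq: "0 < (x::real) \<Longrightarrow> 0 < N \<Longrightarrow> (x ^ N) powr (1 / real N) = x"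
  by (simp add: powr_realpow[symmetric] powr_powr)

lemma funpow_period: "(F ^^ N) w = w \<Longrightarrow> ((F ^^ N) ^^ m) w = w"
  by (induction m) auto

lemma funpow_mod: "(F ^^ N) w = w \<Longrightarrow> (F ^^ k) w = (F ^^ (k mod N)) w"
proof -
  assume a: "(F ^^ N) w = w"
  have "k = k mod N + N * (k div N)" by simp
  then have "(F ^^ k) w = (F ^^ (k mod N)) ((F ^^ (N * (k div N))) w)"
    by (metis funpow_add comp_apply)
  also have "(F ^^ (N * (k div N))) w = w" using funpow_period[OF a] by (simp add: funpow_mult)
  finally show ?thesis .
qed

lemma orbit_ret:
  assumes "(F ^^ N) w = w" "0 < M" "M < N" "(F ^^ M) w \<noteq> w" "k < N"
  shows "(F ^^ M) ((F ^^ k) w) \<noteq> (F ^^ k) w"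
proof
  assume e: "(F ^^ M) ((F ^^ k) w) = (F ^^ k) w"
  have "(F ^^ (N - k)) ((F ^^ M) ((F ^^ k) w)) = (F ^^ M) ((F ^^ (N - k + k)) w)"
    by (metis funpow_add comp_apply add.commute)
  also have "(F ^^ (N - k + k)) w = w" using assms by simp
  finally have "(F ^^ (N - k)) ((F ^^ M) ((F ^^ k) w)) = (F ^^ M) w" .
  moreover have "(F ^^ (N - k)) ((F ^^ k) w) = w"
    using assms by (metis funpow_add comp_apply le_add_diff_inverse2 less_imp_le)
  ultimately show False using e assms(4) by simp
qed

context ultra begin

lemma cycle_facts:
  assumes f: "bnd f" "f $ 0 = 0" "av (f $ 1) = 1"
    and w0: "min_periodic av f w0 N"
  shows "cycle_of av f w0 = (\<lambda>k. (ps_eval av f ^^ k) w0) ` {..<N}"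
    and "card (cycle_of av f w0) = N"
    and "\<And>c. c \<in> cycle_of av f w0 \<Longrightarrow> av c = av w0 \<and> av c < 1 \<and> (ps_eval av f ^^ N) c = c"
    and "\<And>c M. c \<in> cycle_of av f w0 \<Longrightarrow> 0 < M \<Longrightarrow> M < N \<Longrightarrow> (ps_eval av f ^^ M) c \<noteq> c"
proof -
  let ?F = "ps_eval av f"
  have per: "(?F ^^ N) w0 = w0" and N: "0 < N" and a0: "av w0 < 1"
    and mn: "\<And>k. 0 < k \<Longrightarrow> k < N \<Longrightarrow> (?F ^^ k) w0 \<noteq> w0"
    using w0 unfolding min_periodic_def by auto
  show C: "cycle_of av f w0 = (\<lambda>k. (?F ^^ k) w0) ` {..<N}"
    unfolding cycle_of_def
  proof
    show "range (\<lambda>k. (?F ^^ k) w0) \<subseteq> (\<lambda>k. (?F ^^ k) w0) ` {..<N}"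
    proof
      fix x assume "x \<in> range (\<lambda>k. (?F ^^ k) w0)"
      then obtain k where "x = (?F ^^ k) w0" by auto
      then show "x \<in> (\<lambda>k. (?F ^^ k) w0) ` {..<N}"
        using funpow_mod[OF per, of k] N by (intro image_eqI[of _ _ "k mod N"]) auto
    qed
  qed auto
  have inj: "inj_on (\<lambda>k. (?F ^^ k) w0) {..<N}"
  proof (rule inj_onI, rule ccontr)
    fix i j assume ij: "i \<in> {..<N}" "j \<in> {..<N}" "(?F ^^ i) w0 = (?F ^^ j) w0" "i \<noteq> j"
    have neq: "(?F ^^ j) w0 \<noteq> (?F ^^ i) w0" if "i < j" "j < N" for i j
    proof -
      have "(?F ^^ (j - i)) ((?F ^^ i) w0) = (?F ^^ (j - i + i)) w0" by (simp add: funpow_add)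
      moreover have "j - i + i = j" using that by simp
      moreover have "(?F ^^ (j - i)) ((?F ^^ i) w0) \<noteq> (?F ^^ i) w0"
        using orbit_ret[OF per _ _ mn[of "j - i"], of i] that by simp
      ultimately show ?thesis by simp
    qed
    show False
    proof (cases "i < j")
      case True then show False using neq[of i j] ij by simp
    next
      case False then have "j < i" using ij by simp
      then show False using neq[of j i] ij by simp
    qed
  qed
  show "card (cycle_of av f w0) = N" unfolding C using card_image[OF inj] by simp
  show "av c = av w0 \<and> av c < 1 \<and> (?F ^^ N) c = c" if "c \<in> cycle_of av f w0" for c
  proof -
    from that have "c \<in> range (\<lambda>k. (?F ^^ k) w0)" by (simp only: cycle_of_def)
    then obtain k where k: "c = (?F ^^ k) w0" by blast
    have "av ((?F ^^ k) w0) = av w0" for k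
      by (induction k) (auto simp: ev_isometry[OF f] a0)
    moreover have "(?F ^^ N) ((?F ^^ k) w0) = (?F ^^ k) w0"
      by (metis funpow_add comp_apply add.commute per)
    ultimately show ?thesis using k a0 by simp
  qed
  show "(?F ^^ M) c \<noteq> c" if cc: "c \<in> cycle_of av f w0" and "0 < M" "M < N" for c M
  proof -
    obtain k where k: "k < N" "c = (?F ^^ k) w0" using cc C by auto
    show ?thesis using orbit_ret[OF per that(2,3) mn[OF that(2,3)] k(1)] k(2) by simp
  qed
qed

end


context ultra begin

lemma cycle_main:
  assumes f: "bnd f" "f $ 0 = 0" "av (f $ 1) = 1"
    and w0: "min_periodic av f w0 N" "w0 \<noteq> 0"
    and h: "bnd h" and hz: "\<And>c. c \<in> cycle_of av f w0 \<Longrightarrow> ps_eval av h c = 0"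
    and h0: "h $ 0 \<noteq> 0"
  shows "av (h $ 0) powr (1 / real N) \<le> av w0"
    and "av w0 = av (h $ 0) powr (1 / real N) \<longleftrightarrow> wd h N"
    and "av w0 = av (h $ 0) powr (1 / real N) \<Longrightarrow> av z < 1 \<Longrightarrow> ps_eval av h z = 0 \<Longrightarrow>
         z \<in> cycle_of av f w0"
proof -
  let ?C = "cycle_of av f w0"
  have N: "0 < N" using w0 unfolding min_periodic_def by auto
  have fin: "finite ?C" using cycle_facts(1)[OF f w0(1)] by simp
  have card: "card ?C = N" using cycle_facts(2)[OF f w0(1)] .
  have cf: "av c = av w0" "av c < 1" if "c \<in> ?C" for c using cycle_facts(3)[OF f w0(1) that] by auto
  obtain G where G: "bnd G" "h = P ?C * G" using multi_factor[OF fin cf(2) hz h] by blast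
  have "h $ 0 = (\<Prod>c\<in>?C. - c) * G $ 0" using G(2) P_nth0[of ?C] by simp
  then have "av (h $ 0) = (\<Prod>c\<in>?C. av c) * av (G $ 0)" by (simp add: prod)
  also have "(\<Prod>c\<in>?C. av c) = (\<Prod>c\<in>?C. av w0)" using cf(1) by (rule prod.cong[OF refl])
  also have "\<dots> = av w0 ^ N" using card by simp
  finally have A: "av (h $ 0) = av w0 ^ N * av (G $ 0)" .
  define \<gamma> where "\<gamma> = av (G $ 0)"
  have g1: "\<gamma> \<le> 1" unfolding \<gamma>_def using bndD[OF G(1)] .
  have aw: "0 < av w0" using w0(2) by simp
  have gp: "0 < \<gamma>" using A h0 unfolding \<gamma>_def using nn[of "G $ 0"] by (metis less_eq_real_def mult_zero_right pos)
  have awN: "0 < av w0 ^ N" using aw by simp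
  have le: "av (h $ 0) \<le> av w0 ^ N" using A g1 awN unfolding \<gamma>_def by (simp add: mult_le_one mult_left_le)
  show "av (h $ 0) powr (1 / real N) \<le> av w0"
  proof -
    have "av (h $ 0) powr (1 / real N) \<le> (av w0 ^ N) powr (1 / real N)"
      by (rule powr_mono2) (use le in auto)
    then show ?thesis using powr_root_eq[OF aw N] by simp
  qed
  have eq_iff: "av w0 = av (h $ 0) powr (1 / real N) \<longleftrightarrow> \<gamma> = 1"
  proof
    assume e: "av w0 = av (h $ 0) powr (1 / real N)"
    have hp: "0 < av (h $ 0)" using h0 by simp
    have "av w0 ^ N = (av (h $ 0) powr (1 / real N)) powr (real N)"
      unfolding e using hp by (simp add: powr_realpow)
    also have "\<dots> = av (h $ 0)" using N hp by (simp add: powr_powr)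
    finally have "av w0 ^ N = av w0 ^ N * \<gamma>" using A unfolding \<gamma>_def by simp
    then show "\<gamma> = 1" using awN w0(2) by simp
  next
    assume "\<gamma> = 1"
    then show "av w0 = av (h $ 0) powr (1 / real N)" using A powr_root_eq[OF aw N] unfolding \<gamma>_def by simp
  qed
  have "wd h N \<longleftrightarrow> wd G 0" using wd_P[OF fin cf(2) G(1), of 0] G(2) card by simp
  also have "\<dots> \<longleftrightarrow> \<gamma> = 1" unfolding wd_def \<gamma>_def by simp
  finally show "av w0 = av (h $ 0) powr (1 / real N) \<longleftrightarrow> wd h N" using eq_iff by simp
  assume e: "av w0 = av (h $ 0) powr (1 / real N)" and z: "av z < 1" and hz0: "ps_eval av h z = 0"
  have G0: "av (G $ 0) = 1" using eq_iff e unfolding \<gamma>_def by simp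
  have "ps_eval av h z = ps_eval av (P ?C) z * ps_eval av G z"
    unfolding G(2) by (rule ev_mult[OF bnd_P[OF cf(2)] G(1) z])
  also have "\<dots> = (\<Prod>c\<in>?C. z - c) * ps_eval av G z" using ev_P[OF fin cf(2) z] by simp
  finally have "(\<Prod>c\<in>?C. z - c) = 0" using hz0 unit_nonzero[OF G(1) G0 z] by simp
  then show "z \<in> ?C" using fin by simp
qed

end


context ultra begin

lemma wd_shift: "av (g $ 0) < 1 \<Longrightarrow> wd g (Suc d) \<longleftrightarrow> wd (fps_shift 1 g) d"
  unfolding wd_def by (auto simp: less_Suc_eq_0_disj)

lemma ev_iterX:
  assumes "bnd f" "f $ 0 = 0" "av w < 1"
  shows "ps_eval av (fps_iter f N - fps_X) w = (ps_eval av f ^^ N) w - w"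
  using ev_diff[OF bnd_iter[OF assms(1)] bnd_X assms(3)] ev_iter[OF assms] ev_X by simp

lemma zero_fix:
  assumes "bnd f" "f $ 0 = 0" "min_periodic av f w N" "2 \<le> N"
  shows "w \<noteq> 0"
proof
  assume w: "w = 0"
  have "av (ps_eval av f 0) \<le> 0" using ev_small[OF assms(1,2), of 0] by simp
  then have "ps_eval av f 0 = 0" using nn[of "ps_eval av f 0"] by simp
  then have "(ps_eval av f ^^ 1) w = w" using w by simp
  then show False using assms(3,4) unfolding min_periodic_def by auto
qed

end

theorem lemma2p3:
  fixes av :: "'a::field \<Rightarrow> real" and p q :: nat and lam :: 'a and f :: "'a fps"
  assumes av: "ultrametric_abs av" and complete: "av_complete av"
    and p: "prime p" and resp: "av (of_nat p) < 1"
    and lam: "av lam = 1"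
    and ord_fin: "\<exists>k>0. av (lam ^ k - 1) < 1"
    and q: "q = (LEAST k. 0 < k \<and> av (lam ^ k - 1) < 1)"
    and fO: "\<forall>i. av (fps_nth f i) \<le> 1"
    and f0: "fps_nth f 0 = 0" and f1: "fps_nth f 1 = lam"
  shows
   "(lam ^ q \<noteq> 1 \<longrightarrow>
      (\<forall>w0. min_periodic av f w0 q \<and> (q = 1 \<longrightarrow> w0 \<noteq> 0) \<longrightarrow>
         av w0 \<ge> av (lam ^ q - 1) powr (1 / real q) \<and>
         (av w0 = av (lam ^ q - 1) powr (1 / real q) \<longleftrightarrow>
            wideg av (fps_iter f q - fps_X) = enat (q + 1)) \<and>
         (av w0 = av (lam ^ q - 1) powr (1 / real q) \<longrightarrow>
            (\<forall>w. min_periodic av f w q \<and> w \<noteq> 0 \<longrightarrow> w \<in> cycle_of av f w0) \<and>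
            (\<forall>w' \<in> cycle_of av f w0. av w' = av (lam ^ q - 1) powr (1 / real q)))))
    \<and>
    (\<forall>n z0. 1 \<le> n \<and> lam ^ (q * p ^ n) \<noteq> 1 \<and> min_periodic av f z0 (q * p ^ n) \<longrightarrow>
       (let r = av ((lam ^ (q * p ^ n) - 1) / (lam ^ (q * p ^ (n - 1)) - 1))
                  powr (1 / real (q * p ^ n)) in
         av z0 \<ge> r \<and>
         (av z0 = r \<longleftrightarrow>
            wideg av ((fps_iter f (q * p ^ n) - fps_X) / (fps_iter f (q * p ^ (n - 1)) - fps_X))
              = enat (q * p ^ n)) \<and>
         (av z0 = r \<longrightarrow>
            (\<forall>z. min_periodic av f z (q * p ^ n) \<longrightarrow> z \<in> cycle_of av f z0) \<and>
            (\<forall>z' \<in> cycle_of av f z0. av z' = r))))"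
proof -
  interpret ultra av using av complete by unfold_locales
  have fb: "bnd f" using fO unfolding bnd_def by simp
  have f0': "f $ 0 = 0" using f0 by simp
  have f1': "av (f $ 1) = 1" using f1 lam by simp
  let ?F = "ps_eval av f"
  have part1: "lam ^ q \<noteq> 1 \<longrightarrow>
      (\<forall>w0. min_periodic av f w0 q \<and> (q = 1 \<longrightarrow> w0 \<noteq> 0) \<longrightarrow>
         av w0 \<ge> av (lam ^ q - 1) powr (1 / real q) \<and>
         (av w0 = av (lam ^ q - 1) powr (1 / real q) \<longleftrightarrow>
            wideg av (fps_iter f q - fps_X) = enat (q + 1)) \<and>
         (av w0 = av (lam ^ q - 1) powr (1 / real q) \<longrightarrow>
            (\<forall>w. min_periodic av f w q \<and> w \<noteq> 0 \<longrightarrow> w \<in> cycle_of av f w0) \<and>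
            (\<forall>w' \<in> cycle_of av f w0. av w' = av (lam ^ q - 1) powr (1 / real q))))"
  proof (intro impI allI)
    fix w0 assume lq: "lam ^ q \<noteq> 1" and w: "min_periodic av f w0 q \<and> (q = 1 \<longrightarrow> w0 \<noteq> 0)"
    have mp: "min_periodic av f w0 q" using w by simp
    have qp: "0 < q" using mp unfolding min_periodic_def by simp
    have w0: "w0 \<noteq> 0"
    proof (cases "q = 1")
      case True then show ?thesis using w by simp
    next
      case False then show ?thesis using zero_fix[OF fb f0' mp] qp by simp
    qed
    define g where "g = fps_iter f q - fps_X"
    define h where "h = fps_shift 1 g"
    have gb: "bnd g" unfolding g_def by (intro bnd_diff bnd_iter fb bnd_X)
    have hb: "bnd h" unfolding h_def by (rule bnd_shift[OF gb])
    have g0: "g $ 0 = 0" unfolding g_def using iter_nth0[OF f0'] by simp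
    have h0: "h $ 0 = lam ^ q - 1" unfolding h_def g_def using iter_nth1[OF f0', of q] f1 by simp
    have hz: "ps_eval av h c = 0" if c: "av c < 1" "c \<noteq> 0" "(?F ^^ q) c = c" for c
    proof -
      have "0 = ps_eval av g c" unfolding g_def using ev_iterX[OF fb f0' c(1)] c(3) by simp
      also have "\<dots> = c * ps_eval av h c" unfolding h_def using ev_shift[OF gb c(1)] g0 by simp
      finally show ?thesis using c(2) by simp
    qed
    have hzC: "ps_eval av h c = 0" if "c \<in> cycle_of av f w0" for c
    proof -
      have "av c = av w0" "av c < 1" "(?F ^^ q) c = c" using cycle_facts(3)[OF fb f0' f1' mp that] by auto
      then show ?thesis using hz w0 by (metis z_iff)
    qed
    have h00: "h $ 0 \<noteq> 0" using h0 lq by simp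
    note cm = cycle_main[OF fb f0' f1' mp w0 hb hzC h00]
    have wdg: "wideg av (fps_iter f q - fps_X) = enat (q + 1) \<longleftrightarrow> wd h q"
      using wideg_eq[OF gb, of "q + 1"] wd_shift[of g q] g0 unfolding g_def h_def by simp
    show "av w0 \<ge> av (lam ^ q - 1) powr (1 / real q) \<and>
         (av w0 = av (lam ^ q - 1) powr (1 / real q) \<longleftrightarrow>
            wideg av (fps_iter f q - fps_X) = enat (q + 1)) \<and>
         (av w0 = av (lam ^ q - 1) powr (1 / real q) \<longrightarrow>
            (\<forall>w. min_periodic av f w q \<and> w \<noteq> 0 \<longrightarrow> w \<in> cycle_of av f w0) \<and>
            (\<forall>w' \<in> cycle_of av f w0. av w' = av (lam ^ q - 1) powr (1 / real q)))"
    proof (intro conjI impI allI ballI)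
      show "av (lam ^ q - 1) powr (1 / real q) \<le> av w0" using cm(1) h0 by simp
      show "av w0 = av (lam ^ q - 1) powr (1 / real q) \<longleftrightarrow> wideg av (fps_iter f q - fps_X) = enat (q + 1)"
        using cm(2) h0 wdg by simp
    next
      fix w assume e: "av w0 = av (lam ^ q - 1) powr (1 / real q)" and ww: "min_periodic av f w q \<and> w \<noteq> 0"
      then have "av w < 1" "(?F ^^ q) w = w" unfolding min_periodic_def by auto
      then have "ps_eval av h w = 0" using hz ww by simp
      then show "w \<in> cycle_of av f w0" using cm(3)[of w] e h0 \<open>av w < 1\<close> by simp
    next
      fix w' assume e: "av w0 = av (lam ^ q - 1) powr (1 / real q)" and "w' \<in> cycle_of av f w0"
      then show "av w' = av (lam ^ q - 1) powr (1 / real q)" using cycle_facts(3)[OF fb f0' f1' mp] by simp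
    qed
  qed
  have part2: "\<forall>n z0. 1 \<le> n \<and> lam ^ (q * p ^ n) \<noteq> 1 \<and> min_periodic av f z0 (q * p ^ n) \<longrightarrow>
       (let r = av ((lam ^ (q * p ^ n) - 1) / (lam ^ (q * p ^ (n - 1)) - 1))
                  powr (1 / real (q * p ^ n)) in
         av z0 \<ge> r \<and>
         (av z0 = r \<longleftrightarrow>
            wideg av ((fps_iter f (q * p ^ n) - fps_X) / (fps_iter f (q * p ^ (n - 1)) - fps_X))
              = enat (q * p ^ n)) \<and>
         (av z0 = r \<longrightarrow>
            (\<forall>z. min_periodic av f z (q * p ^ n) \<longrightarrow> z \<in> cycle_of av f z0) \<and>
            (\<forall>z' \<in> cycle_of av f z0. av z' = r)))"
  proof (intro allI impI)
    fix n z0 assume as: "1 \<le> n \<and> lam ^ (q * p ^ n) \<noteq> 1 \<and> min_periodic av f z0 (q * p ^ n)"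
    define N where "N = q * p ^ n"
    define M where "M = q * p ^ (n - 1)"
    have mp: "min_periodic av f z0 N" and lN: "lam ^ N \<noteq> 1" using as unfolding N_def by auto
    have Npos: "0 < N" using mp unfolding min_periodic_def by simp
    have p2: "2 \<le> p" using p by (simp add: prime_ge_2_nat)
    have NM: "N = M * p" unfolding N_def M_def using as
      by (metis Suc_diff_le diff_Suc_1 mult.assoc mult.commute power_Suc)
    have Mpos: "0 < M" using Npos NM by simp
    have MN: "M < N" using NM Mpos p2 by simp
    have N2: "2 \<le> N" using Mpos MN by simp
    have z0: "z0 \<noteq> 0" using zero_fix[OF fb f0' mp N2] .
    define u where "u = fps_iter f M"
    have ub: "bnd u" unfolding u_def by (rule bnd_iter[OF fb])
    have u0: "u $ 0 = 0" unfolding u_def by (rule iter_nth0[OF f0'])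
    define a where "a = fps_iter f N - fps_X"
    define b where "b = fps_iter f M - fps_X"
    have ab: "a = fps_iter u p - fps_X" unfolding a_def u_def NM using iter_mult[OF f0'] by simp
    obtain c where c: "bnd c" "a = b * c" using iter_divisible[OF ub u0, of p] unfolding ab b_def u_def by blast
    have ev_b: "ps_eval av b w = (?F ^^ M) w - w" if "av w < 1" for w
      unfolding b_def by (rule ev_iterX[OF fb f0' that])
    have ev_a: "ps_eval av a w = (?F ^^ N) w - w" if "av w < 1" for w
      unfolding a_def by (rule ev_iterX[OF fb f0' that])
    have bb: "bnd b" unfolding b_def by (intro bnd_diff bnd_iter fb bnd_X)
    have z0m: "av z0 < 1" "(?F ^^ M) z0 \<noteq> z0" using mp Mpos MN unfolding min_periodic_def by auto
    have bnz: "b \<noteq> 0"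
    proof
      assume "b = 0"
      then have "ps_eval av b z0 = 0" by (simp add: ev_zero)
      then show False using ev_b[OF z0m(1)] z0m(2) by simp
    qed
    have quot: "a / b = c" unfolding c(2) using bnz by simp
    have lM: "lam ^ M \<noteq> 1"
    proof
      assume "lam ^ M = 1"
      then have "lam ^ N = 1" unfolding NM by (simp add: power_mult)
      then show False using lN by simp
    qed
    have a1: "a $ 1 = lam ^ N - 1" unfolding a_def using iter_nth1[OF f0', of N] f1 by simp
    have b1: "b $ 1 = lam ^ M - 1" unfolding b_def using iter_nth1[OF f0', of M] f1 by simp
    have b0: "b $ 0 = 0" unfolding b_def using iter_nth0[OF f0'] by simp
    have "a $ 1 = b $ 1 * c $ 0" unfolding c(2) fps_mult_nth using b0 by simp
    then have e1: "lam ^ N - 1 = (lam ^ M - 1) * c $ 0" using a1 b1 by simp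
    have lM': "lam ^ M - 1 \<noteq> 0" using lM by simp
    have c0: "c $ 0 = (lam ^ N - 1) / (lam ^ M - 1)"
      using e1 lM' by (simp add: eq_divide_eq mult.commute)
    have c00: "c $ 0 \<noteq> 0" using c0 lM lN by simp
    have hz: "ps_eval av c w = 0" if w: "av w < 1" "(?F ^^ N) w = w" "(?F ^^ M) w \<noteq> w" for w
    proof -
      have "0 = ps_eval av a w" using ev_a[OF w(1)] w(2) by simp
      also have "\<dots> = ps_eval av b w * ps_eval av c w" unfolding c(2) by (rule ev_mult[OF bb c(1) w(1)])
      finally show ?thesis using ev_b[OF w(1)] w(3) by simp
    qed
    have hzC: "ps_eval av c x = 0" if "x \<in> cycle_of av f z0" for x
      using hz cycle_facts(3)[OF fb f0' f1' mp that] cycle_facts(4)[OF fb f0' f1' mp that Mpos MN] by simp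
    note cm = cycle_main[OF fb f0' f1' mp z0 c(1) hzC c00]
    have wdg: "wideg av (a / b) = enat N \<longleftrightarrow> wd c N" unfolding quot by (rule wideg_eq[OF c(1)])
    define r where "r = av ((lam ^ N - 1) / (lam ^ M - 1)) powr (1 / real N)"
    have r: "r = av (c $ 0) powr (1 / real N)" unfolding r_def c0 ..
    have "av z0 \<ge> r \<and> (av z0 = r \<longleftrightarrow> wideg av (a / b) = enat N) \<and>
         (av z0 = r \<longrightarrow> (\<forall>z. min_periodic av f z N \<longrightarrow> z \<in> cycle_of av f z0) \<and>
            (\<forall>z' \<in> cycle_of av f z0. av z' = r))"
    proof (intro conjI impI allI ballI)
      show "r \<le> av z0" unfolding r using cm(1) .
      show "av z0 = r \<longleftrightarrow> wideg av (a / b) = enat N" unfolding r wdg using cm(2) .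
    next
      fix z assume e: "av z0 = r" and zz: "min_periodic av f z N"
      then have "av z < 1" "(?F ^^ N) z = z" "(?F ^^ M) z \<noteq> z"
        using Mpos MN unfolding min_periodic_def by auto
      then show "z \<in> cycle_of av f z0" using cm(3) hz e unfolding r by blast
    next
      fix z' assume e: "av z0 = r" and "z' \<in> cycle_of av f z0"
      then show "av z' = r" using cycle_facts(3)[OF fb f0' f1' mp] by simp
    qed
    then show "let r = av ((lam ^ (q * p ^ n) - 1) / (lam ^ (q * p ^ (n - 1)) - 1))
                  powr (1 / real (q * p ^ n)) in
         av z0 \<ge> r \<and>
         (av z0 = r \<longleftrightarrow>
            wideg av ((fps_iter f (q * p ^ n) - fps_X) / (fps_iter f (q * p ^ (n - 1)) - fps_X))
              = enat (q * p ^ n)) \<and>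
         (av z0 = r \<longrightarrow>
            (\<forall>z. min_periodic av f z (q * p ^ n) \<longrightarrow> z \<in> cycle_of av f z0) \<and>
            (\<forall>z' \<in> cycle_of av f z0. av z' = r))"
      unfolding Let_def r_def a_def b_def N_def M_def .
  qed
  show ?thesis using part1 part2 by blast
qed


end
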